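(* Let $n\ge 1$ and consider an operational theory that admits a preparation noncontextual hidden variable model. Consider any protocol for $n$-bit parity-oblivious multiplexing in this theory: for each $x\in\{0,1\}^n$ Alice implements a preparation $P_x$, and for each $y\in\{1,\dots,n\}$ Bob implements a binary-outcome measurement $M_y$ and outputs its outcome $b\in\{0,1\}$. Suppose the protocol is parity-oblivious: for every $s\in\mathrm{Par}$, every measurement $M$ of the theory and every outcome $k$ of $M$, $$\sum_{x:\,x\cdot s=0}p(P_x|k,M)=\sum_{x:\,x\cdot s=1}p(P_x|k,M),$$ where $p(P_x|k,M)$ is the posterior probability of $x$ given outcome $k$ of $M$ under the uniform prior on $x$ (equivalently, $\sum_{x:\,x\cdot s=0}p(k|P_x,M)=\sum_{x:\,x\cdot s=1}p(k|P_x,M)$). Then $$p(b=x_y)=\frac{1}{2^n n}\sum_{y=1}^{n}\sum_{x\in\{0,1\}^n}p(b=x_y|P_x,M_y)\le\frac{n+1}{2n}.$$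
   Context: An operational theory specifies a set of preparation procedures $P$ and measurement procedures $M$ and assigns a probability $p(k|P,M)$ to each outcome $k$ of measurement $M$ given preparation $P$; a procedure that chooses a preparation at random from a list with given probabilities and implements it is also a preparation, whose outcome probabilities are the corresponding convex combination. A hidden variable model of the theory assigns to each preparation $P$ a probability distribution $p(\lambda|P)$ over a space of hidden variables $\lambda$ and to each measurement $M$ conditional outcome distributions $p(k|\lambda,M)$ such that $p(k|P,M)=\int d\lambda\, p(k|\lambda,M)p(\lambda|P)$ for all $P,M,k$; a random mixture of preparations is represented by the corresponding mixture of their distributions $p(\lambda|P)$. The model is preparation noncontextual if whenever two preparations $P,P'$ satisfy $p(k|P,M)=p(k|P',M)$ for all measurements $M$ and outcomes $k$, then $p(\lambda|P)=p(\lambda|P')$. For $x,s\in\{0,1\}^n$, $x\cdot s=\bigoplus_i x_is_i$ (sum modulo 2), called the $s$-parity of $x$; $\mathrm{Par}=\{r\in\{0,1\}^n:\sum_i r_i\ge 2\}$. In $n$-bit parity-oblivious multiplexing, Alice's input $x$ is uniform on $\{0,1\}^n$, Bob's input $y$ is uniform on $\{1,\dots,n\}$ (independently), and Bob must output $b=x_y$, the $y$th bit of $x$. *)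

theory Defs
  imports "HOL-Probability.Probability"
begin

text \<open>Bit strings in {0,1}^n are represented as bool lists of length n
  (True = 1, False = 0); the i-th bit (1-based) of x is x ! (i - 1).\<close>

definition bitvecs :: "nat \<Rightarrow> bool list set" where
  "bitvecs n = {x. length x = n}"

definition sparity :: "bool list \<Rightarrow> bool list \<Rightarrow> bool" where
  "sparity x s = odd (card {i. i < length x \<and> x ! i \<and> s ! i})"

definition Par :: "nat \<Rightarrow> bool list set" where
  "Par n = {s \<in> bitvecs n. card {i. i < n \<and> s ! i} \<ge> 2}"

text \<open>Hidden variable model: hidden variable space L (a measurable space),
  distributions mu P over it (all on the sigma-algebra of L), response functions
  xi M k (conditional outcome distributions over the outcome set Out M),
  reproducing the operational probabilities p P M k = p(k|P,M).\<close>

definition hv_model ::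
  "'l measure \<Rightarrow> ('p \<Rightarrow> 'l measure) \<Rightarrow> ('m \<Rightarrow> 'k \<Rightarrow> 'l \<Rightarrow> real)
   \<Rightarrow> ('m \<Rightarrow> 'k set) \<Rightarrow> ('p \<Rightarrow> 'm \<Rightarrow> 'k \<Rightarrow> real) \<Rightarrow> bool" where
  "hv_model L mu xi Out p \<longleftrightarrow>
     (\<forall>P. prob_space (mu P) \<and> sets (mu P) = sets L) \<and>
     (\<forall>M k. xi M k \<in> borel_measurable L) \<and>
     (\<forall>M k l. 0 \<le> xi M k l) \<and>
     (\<forall>M l. ((\<lambda>k. xi M k l) has_sum 1) (Out M)) \<and>
     (\<forall>P M k. k \<in> Out M \<longrightarrow> p P M k = integral\<^sup>L (mu P) (xi M k))"

definition is_mixture :: "('p \<Rightarrow> real) \<Rightarrow> bool" where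
  "is_mixture w \<longleftrightarrow> finite {P. w P \<noteq> 0} \<and> (\<forall>P. 0 \<le> w P) \<and>
     sum w {P. w P \<noteq> 0} = 1"

definition mix_prob :: "('p \<Rightarrow> 'm \<Rightarrow> 'k \<Rightarrow> real) \<Rightarrow> ('p \<Rightarrow> real) \<Rightarrow> 'm \<Rightarrow> 'k \<Rightarrow> real" where
  "mix_prob p w M k = (\<Sum>P\<in>{P. w P \<noteq> 0}. w P * p P M k)"

definition mix_dist :: "('p \<Rightarrow> 'l measure) \<Rightarrow> ('p \<Rightarrow> real) \<Rightarrow> 'l set \<Rightarrow> real" where
  "mix_dist mu w A = (\<Sum>P\<in>{P. w P \<noteq> 0}. w P * measure (mu P) A)"

text \<open>Preparation noncontextuality, applied to all preparations including random
  mixtures (mixtures represented by the mixture of their distributions).\<close>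
definition prep_noncontextual ::
  "'l measure \<Rightarrow> ('p \<Rightarrow> 'l measure) \<Rightarrow> ('m \<Rightarrow> 'k set) \<Rightarrow> ('p \<Rightarrow> 'm \<Rightarrow> 'k \<Rightarrow> real) \<Rightarrow> bool" where
  "prep_noncontextual L mu Out p \<longleftrightarrow>
     (\<forall>w v. is_mixture w \<and> is_mixture v \<and>
        (\<forall>M. \<forall>k\<in>Out M. mix_prob p w M k = mix_prob p v M k) \<longrightarrow>
        (\<forall>A\<in>sets L. mix_dist mu w A = mix_dist mu v A))"

end

theory Submission
  imports Defs
begin

lemma sum_integral_eq:
  fixes f :: "'l \<Rightarrow> real" and L :: "'l measure" and \<nu> :: "'a \<Rightarrow> 'l measure"
  assumes fin: "finite C0" "finite C1" and ne: "C0 \<noteq> {}" "C1 \<noteq> {}"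
   and ps: "\<And>x. prob_space (\<nu> x)" and ss: "\<And>x. sets (\<nu> x) = sets L"
   and eq: "\<And>A. A \<in> sets L \<Longrightarrow> (\<Sum>x\<in>C0. measure (\<nu> x) A) = (\<Sum>x\<in>C1. measure (\<nu> x) A)"
   and f: "f \<in> borel_measurable L" and B: "\<And>l. \<bar>f l\<bar> \<le> B"
  shows "(\<Sum>x\<in>C0. integral\<^sup>L (\<nu> x) f) = (\<Sum>x\<in>C1. integral\<^sup>L (\<nu> x) f)"
proof -
  have K: "\<And>C. \<nu> \<in> measurable (count_space C) (subprob_algebra L)"
    by (auto simp: space_subprob_algebra ps ss prob_space_imp_subprob_space)
  have sets: "\<And>C. C \<noteq> {} \<Longrightarrow> sets (count_space C \<bind> \<nu>) = sets L"
    by (rule sets_bind) (auto simp: ss)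
  have em: "emeasure (count_space C \<bind> \<nu>) A = ennreal (\<Sum>x\<in>C. measure (\<nu> x) A)"
    if "finite C" "C \<noteq> {}" "A \<in> sets L" for C A
  proof -
    have "emeasure (count_space C \<bind> \<nu>) A = (\<integral>\<^sup>+x. emeasure (\<nu> x) A \<partial>count_space C)"
      by (rule emeasure_bind[OF _ K]) (use that in auto)
    also have "\<dots> = (\<Sum>x\<in>C. emeasure (\<nu> x) A)"
      using that by (simp add: nn_integral_count_space_finite)
    also have "\<dots> = (\<Sum>x\<in>C. ennreal (measure (\<nu> x) A))"
      by (intro sum.cong refl) (metis ps prob_space_def finite_measure.emeasure_eq_measure)
    also have "\<dots> = ennreal (\<Sum>x\<in>C. measure (\<nu> x) A)" by simp
    finally show ?thesis .
  qed
  have NE: "count_space C0 \<bind> \<nu> = count_space C1 \<bind> \<nu>"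
    by (rule measure_eqI) (auto simp: sets ne em fin eq)
  define g where "g l = f l + B" for l
  have g0: "0 \<le> g l" for l unfolding g_def using B[of l] by (auto simp: abs_le_iff)
  have gB: "g l \<le> 2*B" for l unfolding g_def using B[of l] by (auto simp: abs_le_iff)
  have gm: "g \<in> borel_measurable L" using f unfolding g_def by measurable
  have intg: "integrable (\<nu> x) g" for x
  proof -
    interpret prob_space "\<nu> x" by (rule ps)
    show ?thesis
      by (rule integrable_const_bound[where B="2*B"]) (use g0 gB gm ss in \<open>auto simp: measurable_cong_sets[OF ss refl]\<close>)
  qed
  have nn: "(\<integral>\<^sup>+l. ennreal (g l) \<partial>(count_space C \<bind> \<nu>)) = ennreal (\<Sum>x\<in>C. integral\<^sup>L (\<nu> x) g)"
    if "finite C" for C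
  proof -
    have "(\<integral>\<^sup>+l. ennreal (g l) \<partial>(count_space C \<bind> \<nu>)) = (\<integral>\<^sup>+x. \<integral>\<^sup>+l. ennreal (g l) \<partial>\<nu> x \<partial>count_space C)"
      by (rule nn_integral_bind[OF _ K]) (use gm in measurable)
    also have "\<dots> = (\<Sum>x\<in>C. \<integral>\<^sup>+l. ennreal (g l) \<partial>\<nu> x)"
      using that by (simp add: nn_integral_count_space_finite)
    also have "\<dots> = (\<Sum>x\<in>C. ennreal (integral\<^sup>L (\<nu> x) g))"
      by (intro sum.cong refl nn_integral_eq_integral intg) (simp add: g0)
    also have "\<dots> = ennreal (\<Sum>x\<in>C. integral\<^sup>L (\<nu> x) g)"
      by (intro sum_ennreal integral_nonneg_AE) (simp add: g0)
    finally show ?thesis .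
  qed
  have "ennreal (\<Sum>x\<in>C0. integral\<^sup>L (\<nu> x) g) = ennreal (\<Sum>x\<in>C1. integral\<^sup>L (\<nu> x) g)"
    using nn[OF fin(1)] nn[OF fin(2)] NE by simp
  then have E1: "(\<Sum>x\<in>C0. integral\<^sup>L (\<nu> x) g) = (\<Sum>x\<in>C1. integral\<^sup>L (\<nu> x) g)"
    by (subst (asm) ennreal_inj) (auto intro!: sum_nonneg integral_nonneg_AE simp: g0)
  have sp: "space (\<nu> x) = space L" for x by (rule sets_eq_imp_space_eq[OF ss])
  have m1: "measure (\<nu> x) (space L) = 1" for x
    using prob_space.prob_space[OF ps] sp by metis
  have "real (card C0) = real (card C1)"
    using eq[of "space L"] by (simp add: m1)
  moreover have ig: "integral\<^sup>L (\<nu> x) g = integral\<^sup>L (\<nu> x) f + B" for x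
  proof -
    interpret prob_space "\<nu> x" by (rule ps)
    have "integrable (\<nu> x) f"
      by (rule integrable_const_bound[where B="B"]) (use B f in \<open>auto simp: measurable_cong_sets[OF ss refl]\<close>)
    then show ?thesis unfolding g_def by (simp add: Bochner_Integration.integral_add prob_space)
  qed
  ultimately show ?thesis using E1 by (simp add: ig sum.distrib)
qed

lemma mix_conv:
  fixes Prep :: "'x \<Rightarrow> 'p" and C :: "'x set"
  assumes fin: "finite C" and ne: "C \<noteq> {}"
  assumes w_def: "w = (\<lambda>P. real (card {x\<in>C. Prep x = P}) / real (card C))"
  shows "{P. w P \<noteq> 0} = Prep ` C"
    and "(\<Sum>P\<in>{P. w P \<noteq> 0}. w P * g P) = (\<Sum>x\<in>C. g (Prep x)) / real (card C)"
    and "is_mixture w"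
proof -
  have c0: "card C > 0" using fin ne by (simp add: card_gt_0_iff)
  show S: "{P. w P \<noteq> 0} = Prep ` C"
  proof -
    have "w P \<noteq> 0 \<longleftrightarrow> (\<exists>x\<in>C. Prep x = P)" for P
    proof -
      have "w P \<noteq> 0 \<longleftrightarrow> card {x\<in>C. Prep x = P} \<noteq> 0" using c0 by (simp add: w_def)
      also have "\<dots> \<longleftrightarrow> {x\<in>C. Prep x = P} \<noteq> {}" using fin by simp
      finally show ?thesis by blast
    qed
    then show ?thesis by auto
  qed
  have G: "(\<Sum>P\<in>{P. w P \<noteq> 0}. w P * g P) = (\<Sum>x\<in>C. g (Prep x)) / real (card C)" for g
  proof -
    have "(\<Sum>x\<in>C. g (Prep x)) = (\<Sum>P\<in>Prep ` C. \<Sum>x\<in>{x\<in>C. Prep x = P}. g (Prep x))"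
      by (rule sum.image_gen[OF fin])
    also have "\<dots> = (\<Sum>P\<in>Prep ` C. real (card {x\<in>C. Prep x = P}) * g P)"
      by (intro sum.cong refl) simp
    finally show ?thesis by (simp only: S) (simp add: w_def sum_divide_distrib)
  qed
  then show "(\<Sum>P\<in>{P. w P \<noteq> 0}. w P * g P) = (\<Sum>x\<in>C. g (Prep x)) / real (card C)" .
  have "(\<Sum>P\<in>{P. w P \<noteq> 0}. w P * 1) = 1" using G[of "\<lambda>_. 1"] c0 by simp
  then show "is_mixture w" unfolding is_mixture_def S using fin by (auto simp: w_def)
qed

lemma prod_sign:
  fixes T :: "nat set"
  assumes "finite T"
  shows "(\<Prod>i\<in>T. (if P i then -1 else 1::real)) = (-1) ^ card {i\<in>T. P i}"
proof -
  have "(\<Prod>i\<in>T. (if P i then -1 else 1::real)) = (\<Prod>i\<in>T \<inter> {i. P i}. -1) * (\<Prod>i\<in>T \<inter> - {i. P i}. 1)"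
    by (rule prod.If_cases[OF assms])
  also have "\<dots> = (-1) ^ card {i\<in>T. P i}" by (simp add: Int_def)
  finally show ?thesis .
qed

theorem theorem1:
  fixes n :: nat
    and L :: "'l measure" and mu :: "'p \<Rightarrow> 'l measure"
    and xi :: "'m \<Rightarrow> nat \<Rightarrow> 'l \<Rightarrow> real"
    and Out :: "'m \<Rightarrow> nat set" and p :: "'p \<Rightarrow> 'm \<Rightarrow> nat \<Rightarrow> real"
    and Prep :: "bool list \<Rightarrow> 'p" and Meas :: "nat \<Rightarrow> 'm"
  assumes n: "n \<ge> 1"
    and model: "hv_model L mu xi Out p"
    and pnc: "prep_noncontextual L mu Out p"
    and binary: "\<forall>y\<in>{1..n}. Out (Meas y) = {0, 1}"
    and oblivious: "\<forall>s\<in>Par n. \<forall>M. \<forall>k\<in>Out M.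
       (\<Sum>x\<in>{x\<in>bitvecs n. \<not> sparity x s}. p (Prep x) M k)
     = (\<Sum>x\<in>{x\<in>bitvecs n. sparity x s}. p (Prep x) M k)"
  shows "(1 / (2 ^ n * real n)) *
           (\<Sum>y=1..n. \<Sum>x\<in>bitvecs n. p (Prep x) (Meas y) (of_bool (x ! (y - 1))))
         \<le> (real n + 1) / (2 * real n)"
proof -
  have ps: "\<And>P. prob_space (mu P)" and ss: "\<And>P. sets (mu P) = sets L"
    and xm: "\<And>M k. xi M k \<in> borel_measurable L" and xnn: "\<And>M k l. 0 \<le> xi M k l"
    and hs: "\<And>M l. ((\<lambda>k. xi M k l) has_sum 1) (Out M)"
    and rep: "\<And>P M k. k \<in> Out M \<Longrightarrow> p P M k = integral\<^sup>L (mu P) (xi M k)"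
    using model unfolding hv_model_def by auto
  define \<nu> where "\<nu> x = mu (Prep x)" for x
  define Bv where "Bv = bitvecs n"
  have Bv_eq: "Bv = {xs. set xs \<subseteq> (UNIV::bool set) \<and> length xs = n}" by (auto simp: Bv_def bitvecs_def)
  have finBv: "finite Bv" unfolding Bv_eq by (rule finite_lists_length_eq) simp
  have cardBv: "card Bv = 2 ^ n" unfolding Bv_eq by (subst card_lists_length_eq) simp_all
  have xsum: "xi (Meas y) 0 l + xi (Meas y) 1 l = 1" if "y \<in> {1..n}" for y l
  proof -
    have "((\<lambda>k. xi (Meas y) k l) has_sum 1) {0, 1}" using hs[of "Meas y" l] binary that by simp
    moreover have "((\<lambda>k. xi (Meas y) k l) has_sum (\<Sum>k\<in>{0,1}. xi (Meas y) k l)) {0, 1}"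
      by (rule has_sum_finite) simp
    ultimately show ?thesis using has_sum_unique by fastforce
  qed
  have xle: "xi (Meas y) k l \<le> 1" if "y \<in> {1..n}" "k \<in> {0,1}" for y k l
    using xsum[OF that(1), of l] xnn[of "Meas y" 0 l] xnn[of "Meas y" 1 l] that(2) by auto
  have pdef: "p (Prep x) (Meas y) k = integral\<^sup>L (\<nu> x) (xi (Meas y) k)" if "y \<in> {1..n}" "k \<in> {0,1}" for x y k
    using rep[of k "Meas y" "Prep x"] binary that by (simp add: \<nu>_def)
  have psn: "prob_space (\<nu> x)" for x by (simp add: \<nu>_def ps)
  have ssn: "sets (\<nu> x) = sets L" for x by (simp add: \<nu>_def ss)
  have intb: "integrable (\<nu> x) f" if "f \<in> borel_measurable L" "\<And>l. \<bar>f l\<bar> \<le> (B::real)" for x f B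
  proof -
    interpret prob_space "\<nu> x" by (rule psn)
    show ?thesis
      by (rule integrable_const_bound[where B="B"]) (use that in \<open>auto simp: measurable_cong_sets[OF ssn refl]\<close>)
  qed
  have xabs: "\<bar>xi (Meas y) k l\<bar> \<le> 1" if "y \<in> {1..n}" "k \<in> {0,1}" for y k l
    using xle[OF that] xnn[of "Meas y" k l] by simp
  have one: "p (Prep x) (Meas 1) 0 + p (Prep x) (Meas 1) 1 = 1" for x
  proof -
    have y1: "(1::nat) \<in> {1..n}" using n by simp
    have "p (Prep x) (Meas 1) 0 + p (Prep x) (Meas 1) 1
        = integral\<^sup>L (\<nu> x) (\<lambda>l. xi (Meas 1) 0 l + xi (Meas 1) 1 l)"
      using y1 by (simp add: pdef intb[OF xm xabs] Bochner_Integration.integral_add)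
    also have "\<dots> = integral\<^sup>L (\<nu> x) (\<lambda>l. 1)" using xsum[OF y1] by simp
    also have "\<dots> = 1" using psn[of x] by (simp add: prob_space.prob_space)
    finally show ?thesis .
  qed
  have setq: "{x\<in>Bv. \<not> sparity x s} \<noteq> {} \<and> {x\<in>Bv. sparity x s} \<noteq> {} \<and> (\<Sum>x\<in>{x\<in>Bv. \<not> sparity x s}. measure (\<nu> x) A) = (\<Sum>x\<in>{x\<in>Bv. sparity x s}. measure (\<nu> x) A)"
    if sP: "s \<in> Par n" and A: "A \<in> sets L" for s A
  proof -
    define C0 where "C0 = {x\<in>Bv. \<not> sparity x s}"
    define C1 where "C1 = {x\<in>Bv. sparity x s}"
    have fin0: "finite C0" and fin1: "finite C1" using finBv by (auto simp: C0_def C1_def)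
    have e: "{i. i < n \<and> replicate n False ! i \<and> s ! i} = {}" by auto
    have z: "replicate n False \<in> C0" unfolding C0_def Bv_def bitvecs_def sparity_def
      apply simp apply (subst e) by simp
    have ob: "(\<Sum>x\<in>C0. p (Prep x) M k) = (\<Sum>x\<in>C1. p (Prep x) M k)" if "k \<in> Out M" for M k
      using oblivious sP that by (simp add: C0_def C1_def Bv_def)
    have y1: "(1::nat) \<in> {1..n}" using n by simp
    have "real (card C0) = (\<Sum>x\<in>C0. p (Prep x) (Meas 1) 0 + p (Prep x) (Meas 1) 1)" using one by simp
    also have "\<dots> = (\<Sum>x\<in>C1. p (Prep x) (Meas 1) 0 + p (Prep x) (Meas 1) 1)"
      using ob[of 0 "Meas 1"] ob[of 1 "Meas 1"] binary y1 by (simp add: sum.distrib)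
    also have "\<dots> = real (card C1)" using one by simp
    finally have cc: "real (card C0) = real (card C1)" .
    have ne0: "C0 \<noteq> {}" using z by auto
    have ne1: "C1 \<noteq> {}" using cc ne0 fin0 fin1 by auto
    define w where "w = (\<lambda>P. real (card {x\<in>C0. Prep x = P}) / real (card C0))"
    define v where "v = (\<lambda>P. real (card {x\<in>C1. Prep x = P}) / real (card C1))"
    note W = mix_conv[OF fin0 ne0 w_def]
    note V = mix_conv[OF fin1 ne1 v_def]
    have "\<forall>M. \<forall>k\<in>Out M. mix_prob p w M k = mix_prob p v M k"
      unfolding mix_prob_def W(2) V(2) using ob cc by simp
    then have "\<forall>A\<in>sets L. mix_dist mu w A = mix_dist mu v A"
      using pnc W(3) V(3) unfolding prep_noncontextual_def by blast
    then have "mix_dist mu w A = mix_dist mu v A" using A by blast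
    then have "(\<Sum>x\<in>C0. measure (\<nu> x) A) / real (card C0) = (\<Sum>x\<in>C1. measure (\<nu> x) A) / real (card C1)"
      unfolding mix_dist_def W(2) V(2) \<nu>_def .
    then show ?thesis using cc ne0 ne1 fin1 by (auto simp: C0_def C1_def)
  qed
  define a where "a i l = xi (Meas (Suc i)) 0 l - xi (Meas (Suc i)) 1 l" for i l
  define sg where "sg i x = (if x ! i then -1 else (1::real))" for i and x :: "bool list"
  define chi where "chi T x = ((-1::real) ^ card {i\<in>T. x ! i})" for T and x :: "bool list"
  define c where "c T l = (\<Prod>i\<in>T. - a i l)" for T l
  have am: "a i \<in> borel_measurable L" for i unfolding a_def[abs_def] using xm by measurable
  have aabs: "\<bar>a i l\<bar> \<le> 1" if "i < n" for i l
  proof -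
    have y: "Suc i \<in> {1..n}" using that by simp
    show ?thesis using xle[OF y, of 0 l] xle[OF y, of 1 l] xnn[of "Meas (Suc i)" 0 l] xnn[of "Meas (Suc i)" 1 l]
      by (simp add: a_def)
  qed
  have cm: "c T \<in> borel_measurable L" for T unfolding c_def[abs_def] using am by measurable
  have cabs: "\<bar>c T l\<bar> \<le> 1" if "T \<subseteq> {..<n}" for T l
  proof -
    have "\<bar>c T l\<bar> = (\<Prod>i\<in>T. \<bar>a i l\<bar>)" by (simp add: c_def abs_prod)
    also have "\<dots> \<le> 1" using aabs that by (intro prod_le_1) auto
    finally show ?thesis .
  qed
  have parT: "(\<Sum>x\<in>Bv. chi T x * integral\<^sup>L (\<nu> x) (c T)) = 0"
    if T: "T \<subseteq> {..<n}" "2 \<le> card T" for T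
  proof -
    define s where "s = map (\<lambda>i. i \<in> T) [0..<n]"
    have "{i. i < n \<and> s ! i} = T" using T by (auto simp: s_def)
    then have sP: "s \<in> Par n" using T by (simp add: Par_def bitvecs_def s_def)
    have spar: "sparity x s = odd (card {i\<in>T. x ! i})" if "x \<in> Bv" for x
    proof -
      have "{i. i < length x \<and> x ! i \<and> s ! i} = {i\<in>T. x ! i}"
        using that T by (auto simp: s_def Bv_def bitvecs_def)
      then show ?thesis by (simp add: sparity_def)
    qed
    have "(\<Sum>x\<in>Bv. chi T x * integral\<^sup>L (\<nu> x) (c T))
        = (\<Sum>x\<in>Bv. if sparity x s then - integral\<^sup>L (\<nu> x) (c T) else integral\<^sup>L (\<nu> x) (c T))"
      by (intro sum.cong refl) (auto simp: spar chi_def)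
    also have "\<dots> = (\<Sum>x\<in>{x\<in>Bv. sparity x s}. - integral\<^sup>L (\<nu> x) (c T))
                   + (\<Sum>x\<in>{x\<in>Bv. \<not> sparity x s}. integral\<^sup>L (\<nu> x) (c T))"
      by (subst sum.If_cases[OF finBv]) (simp add: Int_def Collect_conj_eq[symmetric] Compl_eq)
    also have "(\<Sum>x\<in>{x\<in>Bv. \<not> sparity x s}. integral\<^sup>L (\<nu> x) (c T))
             = (\<Sum>x\<in>{x\<in>Bv. sparity x s}. integral\<^sup>L (\<nu> x) (c T))"
    proof (rule sum_integral_eq[OF _ _ _ _ psn ssn _ cm cabs[OF T(1)]])
      show "finite {x \<in> Bv. \<not> sparity x s}" "finite {x \<in> Bv. sparity x s}" using finBv by auto
      show "{x \<in> Bv. \<not> sparity x s} \<noteq> {}" "{x \<in> Bv. sparity x s} \<noteq> {}"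
        using setq[OF sP sets.top] by auto
      show "\<And>A. A \<in> sets L \<Longrightarrow> (\<Sum>x\<in>{x \<in> Bv. \<not> sparity x s}. measure (\<nu> x) A) = (\<Sum>x\<in>{x \<in> Bv. sparity x s}. measure (\<nu> x) A)"
        using setq[OF sP] by blast
    qed
    finally show ?thesis by (simp add: sum_negf)
  qed
  have ptw: "0 \<le> (\<Sum>T\<in>Pow {..<n}. c T l * chi T x)" for x l
  proof -
    have "0 \<le> (\<Prod>i\<in>{..<n}. - a i l * sg i x + 1)"
    proof (intro prod_nonneg)
      fix i assume "i \<in> {..<n}"
      then have "\<bar>a i l\<bar> \<le> 1" using aabs by simp
      then show "0 \<le> - a i l * sg i x + 1" by (auto simp: sg_def abs_le_iff)
    qed
    also have "\<dots> = (\<Sum>T\<in>Pow {..<n}. (\<Prod>i\<in>T. - a i l * sg i x) * (\<Prod>i\<in>{..<n} - T. 1))"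
      by (rule prod_add) simp
    also have "\<dots> = (\<Sum>T\<in>Pow {..<n}. c T l * chi T x)"
    proof (intro sum.cong refl)
      fix T assume "T \<in> Pow {..<n}"
      then have fT: "finite T" by (auto intro: finite_subset)
      have "(\<Prod>i\<in>T. - a i l * sg i x) = c T l * (\<Prod>i\<in>T. sg i x)"
        unfolding c_def by (subst prod.distrib[symmetric]) simp
      also have "(\<Prod>i\<in>T. sg i x) = chi T x"
        unfolding sg_def chi_def by (rule prod_sign[OF fT])
      finally show "(\<Prod>i\<in>T. - a i l * sg i x) * (\<Prod>i\<in>{..<n} - T. 1) = c T l * chi T x" by simp
    qed
    finally show ?thesis .
  qed
  define G where "G T = (\<Sum>x\<in>Bv. chi T x * integral\<^sup>L (\<nu> x) (c T))" for T
  have cint: "integrable (\<nu> x) (c T)" if "T \<in> Pow {..<n}" for x T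
    using intb[OF cm cabs] that by auto
  have G0: "0 \<le> (\<Sum>T\<in>Pow {..<n}. G T)"
  proof -
    have "0 \<le> (\<Sum>x\<in>Bv. integral\<^sup>L (\<nu> x) (\<lambda>l. \<Sum>T\<in>Pow {..<n}. c T l * chi T x))"
      by (intro sum_nonneg integral_nonneg_AE AE_I2 ptw)
    also have "\<dots> = (\<Sum>x\<in>Bv. \<Sum>T\<in>Pow {..<n}. chi T x * integral\<^sup>L (\<nu> x) (c T))"
    proof (intro sum.cong refl)
      fix x assume "x \<in> Bv"
      have "integral\<^sup>L (\<nu> x) (\<lambda>l. \<Sum>T\<in>Pow {..<n}. c T l * chi T x)
          = (\<Sum>T\<in>Pow {..<n}. integral\<^sup>L (\<nu> x) (\<lambda>l. c T l * chi T x))"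
        by (rule Bochner_Integration.integral_sum[where f="\<lambda>T l. c T l * chi T x"]) (auto intro: cint integrable_mult_left)
      then show "integral\<^sup>L (\<nu> x) (\<lambda>l. \<Sum>T\<in>Pow {..<n}. c T l * chi T x)
          = (\<Sum>T\<in>Pow {..<n}. chi T x * integral\<^sup>L (\<nu> x) (c T))"
        by (simp add: mult.commute)
    qed
    also have "\<dots> = (\<Sum>T\<in>Pow {..<n}. G T)" unfolding G_def by (rule sum.swap)
    finally show ?thesis .
  qed
  have Gsplit: "(\<Sum>T\<in>Pow {..<n}. G T) = G {} + (\<Sum>i<n. G {i})"
  proof -
    let ?S = "insert {} ((\<lambda>i. {i}) ` {..<n})"
    have "(\<Sum>T\<in>Pow {..<n}. G T) = (\<Sum>T\<in>?S. G T)"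
    proof (rule sum.mono_neutral_right)
      show "finite (Pow {..<n})" by simp
      show "?S \<subseteq> Pow {..<n}" by auto
      show "\<forall>T\<in>Pow {..<n} - ?S. G T = 0"
      proof
        fix T assume T: "T \<in> Pow {..<n} - ?S"
        then have fT: "finite T" and Tsub: "T \<subseteq> {..<n}" by (auto intro: finite_subset)
        have "card T \<noteq> 0" using T fT by auto
        moreover have "card T \<noteq> 1" using T Tsub by (auto simp: card_1_singleton_iff)
        ultimately have "2 \<le> card T" by linarith
        then show "G T = 0" unfolding G_def by (rule parT[OF Tsub])
      qed
    qed
    also have "\<dots> = G {} + (\<Sum>i<n. G {i})"
      by (subst sum.insert) (auto simp: sum.reindex inj_on_def)
    finally show ?thesis .
  qed
  have int1: "integral\<^sup>L (\<nu> x) (\<lambda>l. 1::real) = 1" for x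
  proof -
    interpret prob_space "\<nu> x" by (rule psn)
    show ?thesis by (simp add: prob_space)
  qed
  have Gempty: "G {} = 2 ^ n"
  proof -
    have "c {} = (\<lambda>l. 1)" by (simp add: c_def[abs_def])
    then show ?thesis using prob_space.prob_space[OF psn] by (simp add: G_def chi_def cardBv)
  qed
  have Gsing: "G {i} = - (\<Sum>x\<in>Bv. sg i x * integral\<^sup>L (\<nu> x) (a i))" for i
  proof -
    have "c {i} = (\<lambda>l. - a i l)" by (simp add: c_def[abs_def])
    moreover have "chi {i} x = sg i x" for x
    proof -
      have "{j\<in>{i}. x ! j} = (if x ! i then {i} else {})" by auto
      then show ?thesis by (simp add: chi_def sg_def)
    qed
    ultimately show ?thesis by (simp add: G_def sum_negf)
  qed
  have key: "(\<Sum>i<n. \<Sum>x\<in>Bv. sg i x * integral\<^sup>L (\<nu> x) (a i)) \<le> 2 ^ n"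
    using G0 unfolding Gsplit Gempty Gsing by (simp add: sum_negf)
  have succ: "p (Prep x) (Meas (Suc i)) (of_bool (x ! i)) = 1/2 + sg i x / 2 * integral\<^sup>L (\<nu> x) (a i)"
    if "i < n" for i x
  proof -
    interpret prob_space "\<nu> x" by (rule psn)
    have y: "Suc i \<in> {1..n}" using that by simp
    have pt: "xi (Meas (Suc i)) (of_bool (x ! i)) = (\<lambda>l. 1/2 + sg i x / 2 * a i l)"
    proof
      fix l show "xi (Meas (Suc i)) (of_bool (x ! i)) l = 1/2 + sg i x / 2 * a i l"
        using xsum[OF y, of l] by (auto simp: sg_def a_def field_simps)
    qed
    have "p (Prep x) (Meas (Suc i)) (of_bool (x ! i)) = integral\<^sup>L (\<nu> x) (xi (Meas (Suc i)) (of_bool (x ! i)))"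
      by (rule pdef[OF y]) simp
    also have "\<dots> = integral\<^sup>L (\<nu> x) (\<lambda>l. 1/2 + sg i x / 2 * a i l)" by (simp only: pt)
    also have "\<dots> = 1/2 + sg i x / 2 * integral\<^sup>L (\<nu> x) (a i)"
      by (subst Bochner_Integration.integral_add) (auto intro!: intb[OF am aabs[OF that]] simp: prob_space)
    finally show ?thesis .
  qed
  define Q where "Q = (\<Sum>i<n. \<Sum>x\<in>Bv. sg i x * integral\<^sup>L (\<nu> x) (a i))"
  have "(\<Sum>y=1..n. \<Sum>x\<in>bitvecs n. p (Prep x) (Meas y) (of_bool (x ! (y - 1))))
      = (\<Sum>i<n. \<Sum>x\<in>Bv. 1/2 + sg i x / 2 * integral\<^sup>L (\<nu> x) (a i))"
  proof -
    have "{1..n} = {Suc 0..n}" by simp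
    then have "(\<Sum>y=1..n. \<Sum>x\<in>bitvecs n. p (Prep x) (Meas y) (of_bool (x ! (y - 1))))
        = (\<Sum>i<n. \<Sum>x\<in>bitvecs n. p (Prep x) (Meas (Suc i)) (of_bool (x ! i)))"
      by (simp only: sum.atLeast1_atMost_eq) simp
    also have "\<dots> = (\<Sum>i<n. \<Sum>x\<in>Bv. 1/2 + sg i x / 2 * integral\<^sup>L (\<nu> x) (a i))"
      by (intro sum.cong refl) (simp_all add: succ Bv_def)
    finally show ?thesis .
  qed
  also have "\<dots> = real n * 2 ^ n / 2 + Q / 2"
    by (simp add: Q_def sum.distrib cardBv sum_divide_distrib[symmetric] sum_distrib_left[symmetric] mult.commute)
  finally have S: "(\<Sum>y=1..n. \<Sum>x\<in>bitvecs n. p (Prep x) (Meas y) (of_bool (x ! (y - 1)))) = real n * 2 ^ n / 2 + Q / 2" .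
  have Qle: "Q \<le> 2 ^ n" using key by (simp add: Q_def)
  have npos: "real n > 0" using n by simp
  have "(1 / (2 ^ n * real n)) * (real n * 2 ^ n / 2 + Q / 2) \<le> (1 / (2 ^ n * real n)) * ((real n + 1) * 2 ^ n / 2)"
    using Qle npos by (intro mult_left_mono) (auto simp: algebra_simps)
  also have "\<dots> = (real n + 1) / (2 * real n)" using npos by (simp add: field_simps)
  finally show ?thesis unfolding S .
qed

end
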